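(* There exist instances of CLC choice and a valid order-price pair $(\pi,\mathbf p)$ for such an instance such that $\mathbf p$ is not a local Nash equilibrium.
   Context: CLC setup. There are $N$ sellers $\mathcal N=\{1,\dots,N\}$, each selling one item, and a unit mass of customers, each buying at most one item. Items have a price attribute (indexed $0$) and $K$ non-price attributes indexed by $\mathcal A=\{1,\dots,K\}$; $\bar{\mathcal A}=\{0\}\cup\mathcal A$. Non-price attribute $k$ takes values in an arbitrary set $\mathcal V^k$; prices lie in $\mathcal V=[0,\bar v]$ for a fixed $\bar v>0$. Seller $i$'s item has fixed non-price attribute values $v_i^k\in\mathcal V^k$ and price $p_i\in\mathcal V$ chosen by seller $i$; $\mathbf p=(p_1,\dots,p_N)$, and $v_i^0:=p_i$. Each customer $c$ has: a strict total order $\succ_c$ on $\bar{\mathcal A}$ (attribute importance); for each attribute $k$ a complete transitive weak preference $\succsim_c^k$ on its value set, with strict part $\succ_c^k$ and indifference $\sim_c^k$ (and $v\sim_c^k v$), where for price $p\succ_c^0p'$ iff $p<p'$ and $p\sim_c^0p'$ iff $p=p'$; a willingness-to-pay $w_c\in[0,\bar v]$; a set $\mathcal C_c\subseteq\mathcal V^1\times\cdots\times\mathcal V^K$ of admissible non-price attribute vectors; and a strict tie-breaking order over sellers. Customer $c$ lexicographically prefers item $i$ to item $j$ if there is an attribute $k$ with $v_i^{k'}\sim_c^{k'}v_j^{k'}$ for all $k'\succ_c k$ and $v_i^k\succ_c^k v_j^k$; if no such $k$ exists, the tie-breaking order decides. Under the Consider-then-Choose with Lexicographic Choice (CLC) model,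 customer $c$ forms the consideration set $\mathcal N_c=\{i\in\mathcal N: p_i\le w_c,\ (v_i^1,\dots,v_i^K)\in\mathcal C_c\}$, buys nothing if it is empty, and otherwise buys the top-ranked item of $\mathcal N_c$ under this lexicographic order (with tie-breaking). An instance of CLC choice is a joint distribution $\mathcal G$ of these customer primitives; the conditional distribution of $w_c$ given the other primitives is assumed to have a Lipschitz continuous density. $D_i(\mathbf p)$ is the probability a customer buys from seller $i$ and $R_i(\mathbf p)=p_iD_i(\mathbf p)$ is seller $i$'s revenue, also written $R_i(p_i,\mathbf p_{-i})$. Local Nash equilibrium (LNE): $\mathbf p$ with $p_i\in\mathcal V$ for all $i$ such that there exist open neighborhoods $\mathcal U_i\subseteq\mathbb R$ with $p_i\in\mathcal U_i$ and $p_i\in\arg\max_{p\in\overline{\mathcal U_i}}R_i(p,\mathbf p_{-i})$ for all $i$ ($\overline{\mathcal U}$ is the closure). Notation: for $\mathcal S\subseteq\mathcal N$, $\mathbf p^{\mathcal S}$ is the price vector keeping the prices of sellers in $\mathcal S$ and setting the prices of all sellers outside $\mathcal S$ to $0$; $p^{\min}(\mathcal S)=\min_{j\in\mathcal S}p_j$, with $p^{\min}(\emptyset)=\bar v$. Valid order-price pair (VOP): a pair $(\pi,\mathbf p)$ where $\pi:[N]\to\mathcal N$ is a bijection ($\pi(l)$ is the seller of rank $l$) and $\mathbf p\in\mathcal V^N$ satisfies (1) $0\le p_{\pi(N)}\le\cdots\le p_{\pi(1)}\le\bar v$, and (2) letting $\mathcal S_1=\emptyset$ and $\mathcal S_l=\{\pi(j):j<l\}$,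 for every $l$ the price $p_{\pi(l)}$ is a local maximum of $p\mapsto R_{\pi(l)}(p,\mathbf p^{\mathcal S_l}_{-\pi(l)})$ on the interval $[0,p^{\min}(\mathcal S_l)]$. *)

theory Defs
  imports "HOL-Analysis.Analysis"
begin

text \<open>
Sellers are indexed by 0..N-1 (nS), attributes by 0..K (0 = price, 1..K non-price). Customers are described by finitely many
segments s < nseg (non-price primitives, with probability weight wt s); conditionally on
segment s the willingness-to-pay w has density dens s on [0, vbar], required to be
Lipschitz continuous there.
\<close>

record clc_instance =
  nS   :: nat
  nK   :: nat
  vbar :: real
  attr :: "nat \<Rightarrow> nat \<Rightarrow> real"
  nseg :: nat
  wt   :: "nat \<Rightarrow> real"
  aord :: "nat \<Rightarrow> nat list"                   \<comment> \<open>attribute importance, most important first\<close>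
  pref :: "nat \<Rightarrow> nat \<Rightarrow> real \<Rightarrow> real \<Rightarrow> bool"
  adm  :: "nat \<Rightarrow> real list set"
  tb   :: "nat \<Rightarrow> nat list"                   \<comment> \<open>tie-breaking order on sellers, best first\<close>
  dens :: "nat \<Rightarrow> real \<Rightarrow> real"

definition before :: "'a list \<Rightarrow> 'a \<Rightarrow> 'a \<Rightarrow> bool" where
  "before xs x y \<longleftrightarrow> (\<exists>a b. a < b \<and> b < length xs \<and> xs ! a = x \<and> xs ! b = y)"

definition valid_clc :: "clc_instance \<Rightarrow> bool" where
  "valid_clc I \<longleftrightarrow>
     0 < nS I \<and> 0 < vbar I \<and>
     (\<forall>s<nseg I. 0 \<le> wt I s) \<and> (\<Sum>s<nseg I. wt I s) = 1 \<and>
     (\<forall>s<nseg I.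
        distinct (aord I s) \<and> set (aord I s) = {0..nK I} \<and>
        (\<forall>k\<in>{1..nK I}. (\<forall>a b. pref I s k a b \<or> pref I s k b a) \<and>
                         (\<forall>a b c. pref I s k a b \<longrightarrow> pref I s k b c \<longrightarrow> pref I s k a c)) \<and>
        distinct (tb I s) \<and> set (tb I s) = {..<nS I} \<and>
        (\<forall>w\<in>{0..vbar I}. 0 \<le> dens I s w) \<and>
        (dens I s has_integral 1) {0..vbar I} \<and>
        (\<exists>L. L-lipschitz_on {0..vbar I} (dens I s)))"

definition aval :: "clc_instance \<Rightarrow> (nat \<Rightarrow> real) \<Rightarrow> nat \<Rightarrow> nat \<Rightarrow> real" where
  "aval I p i k = (if k = 0 then p i else attr I i k)"

definition sbetter :: "clc_instance \<Rightarrow> nat \<Rightarrow> nat \<Rightarrow> real \<Rightarrow> real \<Rightarrow> bool" where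
  "sbetter I s k a b \<longleftrightarrow> (if k = 0 then a < b else pref I s k a b \<and> \<not> pref I s k b a)"

definition indiff :: "clc_instance \<Rightarrow> nat \<Rightarrow> nat \<Rightarrow> real \<Rightarrow> real \<Rightarrow> bool" where
  "indiff I s k a b \<longleftrightarrow> (if k = 0 then a = b else pref I s k a b \<and> pref I s k b a)"

definition lex_prefers :: "clc_instance \<Rightarrow> nat \<Rightarrow> (nat \<Rightarrow> real) \<Rightarrow> nat \<Rightarrow> nat \<Rightarrow> bool" where
  "lex_prefers I s p i j \<longleftrightarrow>
     (\<exists>k\<in>{0..nK I}.
        (\<forall>k'. before (aord I s) k' k \<longrightarrow> indiff I s k' (aval I p i k') (aval I p j k')) \<and>
        sbetter I s k (aval I p i k) (aval I p j k))"

definition ranked_above :: "clc_instance \<Rightarrow> nat \<Rightarrow> (nat \<Rightarrow> real) \<Rightarrow> nat \<Rightarrow> nat \<Rightarrow> bool" where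
  "ranked_above I s p i j \<longleftrightarrow>
     lex_prefers I s p i j \<or> (\<not> lex_prefers I s p j i \<and> before (tb I s) i j)"

definition consider_set :: "clc_instance \<Rightarrow> nat \<Rightarrow> real \<Rightarrow> (nat \<Rightarrow> real) \<Rightarrow> nat set" where
  "consider_set I s w p =
     {i. i < nS I \<and> p i \<le> w \<and> map (attr I i) [1..<nK I + 1] \<in> adm I s}"

definition buys :: "clc_instance \<Rightarrow> nat \<Rightarrow> real \<Rightarrow> (nat \<Rightarrow> real) \<Rightarrow> nat \<Rightarrow> bool" where
  "buys I s w p i \<longleftrightarrow> i \<in> consider_set I s w p \<and>
     (\<forall>j\<in>consider_set I s w p. j \<noteq> i \<longrightarrow> ranked_above I s p i j)"

definition demand :: "clc_instance \<Rightarrow> (nat \<Rightarrow> real) \<Rightarrow> nat \<Rightarrow> real" where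
  "demand I p i = (\<Sum>s<nseg I. wt I s * integral {w\<in>{0..vbar I}. buys I s w p i} (dens I s))"

definition revenue :: "clc_instance \<Rightarrow> (nat \<Rightarrow> real) \<Rightarrow> nat \<Rightarrow> real" where
  "revenue I p i = p i * demand I p i"

definition is_LNE :: "clc_instance \<Rightarrow> (nat \<Rightarrow> real) \<Rightarrow> bool" where
  "is_LNE I p \<longleftrightarrow>
     (\<forall>i<nS I. p i \<in> {0..vbar I} \<and>
        (\<exists>U. open U \<and> p i \<in> U \<and> (\<forall>q\<in>closure U. revenue I (p(i := q)) i \<le> revenue I p i)))"

definition restrict_prices :: "nat set \<Rightarrow> (nat \<Rightarrow> real) \<Rightarrow> nat \<Rightarrow> real" where
  "restrict_prices S p = (\<lambda>j. if j \<in> S then p j else 0)"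

definition pmin :: "clc_instance \<Rightarrow> nat set \<Rightarrow> (nat \<Rightarrow> real) \<Rightarrow> real" where
  "pmin I S p = (if S = {} then vbar I else Min (p ` S))"

definition local_max_on :: "(real \<Rightarrow> real) \<Rightarrow> real set \<Rightarrow> real \<Rightarrow> bool" where
  "local_max_on f A x \<longleftrightarrow> x \<in> A \<and> (\<exists>d>0. \<forall>y\<in>A. \<bar>y - x\<bar> < d \<longrightarrow> f y \<le> f x)"

text \<open>Valid order-price pair; ranks are 0-based: pi l is the seller of rank l+1.\<close>
definition is_VOP :: "clc_instance \<Rightarrow> (nat \<Rightarrow> nat) \<Rightarrow> (nat \<Rightarrow> real) \<Rightarrow> bool" where
  "is_VOP I \<pi> p \<longleftrightarrow>
     bij_betw \<pi> {..<nS I} {..<nS I} \<and>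
     (\<forall>i<nS I. p i \<in> {0..vbar I}) \<and>
     (\<forall>l. Suc l < nS I \<longrightarrow> p (\<pi> (Suc l)) \<le> p (\<pi> l)) \<and>
     (\<forall>l<nS I.
        local_max_on (\<lambda>q. revenue I ((restrict_prices (\<pi> ` {..<l}) p)(\<pi> l := q)) (\<pi> l))
                     {0..pmin I (\<pi> ` {..<l}) p} (p (\<pi> l)))"

end

theory Submission
  imports Defs
begin

definition I0 :: clc_instance where
  "I0 = \<lparr> nS = 2, nK = 0, vbar = 1, attr = (\<lambda>_ _. 0), nseg = 1, wt = (\<lambda>_. 1),
         aord = (\<lambda>_. [0]), pref = (\<lambda>_ _ _ _. True), adm = (\<lambda>_. UNIV),
         tb = (\<lambda>_. [1,0]), dens = (\<lambda>_ _. 1) \<rparr>"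

lemma before1: "\<not> before [0::nat] k' k"
  unfolding before_def by auto

lemma before2: "before [1::nat,0] i j \<longleftrightarrow> i = 1 \<and> j = 0"
proof
  assume "before [1::nat,0] i j"
  then obtain a b where "a < b" "b < 2" "[1::nat,0] ! a = i" "[1::nat,0] ! b = j"
    unfolding before_def by auto
  moreover have "a = 0" "b = 1" using \<open>a < b\<close> \<open>b < 2\<close> by auto
  ultimately show "i = 1 \<and> j = 0" by simp
next
  assume "i = 1 \<and> j = 0"
  then show "before [1::nat,0] i j" unfolding before_def
    by (intro exI[of _ 0] exI[of _ 1]) simp
qed

lemma lex0: "lex_prefers I0 s p i j \<longleftrightarrow> p i < p j"
  unfolding lex_prefers_def I0_def by (auto simp: before1 sbetter_def aval_def)

lemma ranked0: "ranked_above I0 s p i j \<longleftrightarrow> p i < p j \<or> (\<not> p j < p i \<and> i = 1 \<and> j = 0)"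
  unfolding ranked_above_def lex0 by (simp add: I0_def before2[unfolded One_nat_def])

lemma cs0: "consider_set I0 s w p = {i. i < 2 \<and> p i \<le> w}"
  unfolding consider_set_def by (simp add: I0_def)

lemma buys0: "buys I0 s w p 0 \<longleftrightarrow> p 0 \<le> w \<and> (p 1 \<le> w \<longrightarrow> p 0 < p 1)"
  unfolding buys_def cs0 ranked0 by (auto simp: less_2_cases_iff)

lemma buys1: "buys I0 s w p 1 \<longleftrightarrow> p 1 \<le> w \<and> (p 0 \<le> w \<longrightarrow> p 1 \<le> p 0)"
  proof -
  have "(\<forall>j\<in>{i. i < 2 \<and> p i \<le> w}. j \<noteq> 1 \<longrightarrow> P j) \<longleftrightarrow> (p 0 \<le> w \<longrightarrow> P 0)" for P
  proof
    assume "\<forall>j\<in>{i. i < 2 \<and> p i \<le> w}. j \<noteq> 1 \<longrightarrow> P j"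
    then show "p 0 \<le> w \<longrightarrow> P 0" by auto
  next
    assume H: "p 0 \<le> w \<longrightarrow> P 0"
    show "\<forall>j\<in>{i. i < 2 \<and> p i \<le> w}. j \<noteq> 1 \<longrightarrow> P j"
    proof (intro ballI impI)
      fix j assume "j \<in> {i. i < 2 \<and> p i \<le> w}" "j \<noteq> 1"
      then have "j = 0" "p j \<le> w" by auto
      then show "P j" using H by simp
    qed
  qed
  then show ?thesis unfolding buys_def cs0 ranked0 by (simp add: not_less le_less)
qed

lemma demand0: "demand I0 p i = integral {w\<in>{0..1}. buys I0 0 w p i} (\<lambda>_. 1)"
  unfolding demand_def by (simp add: I0_def)

lemma int_interval: "0 \<le> q \<Longrightarrow> q \<le> 1 \<Longrightarrow> integral {w\<in>{0..1::real}. q \<le> w} (\<lambda>_. 1::real) = 1 - q"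
proof -
  assume "0 \<le> q" "q \<le> 1"
  then have "{w\<in>{0..1::real}. q \<le> w} = {q..1}" by auto
  then show ?thesis using \<open>q \<le> 1\<close> by simp
qed

lemma valid: "valid_clc I0"
  unfolding valid_clc_def
proof (intro conjI)
  show "\<forall>s<nseg I0.
        distinct (aord I0 s) \<and> set (aord I0 s) = {0..nK I0} \<and>
        (\<forall>k\<in>{1..nK I0}. (\<forall>a b. pref I0 s k a b \<or> pref I0 s k b a) \<and>
                         (\<forall>a b c. pref I0 s k a b \<longrightarrow> pref I0 s k b c \<longrightarrow> pref I0 s k a c)) \<and>
        distinct (tb I0 s) \<and> set (tb I0 s) = {..<nS I0} \<and>
        (\<forall>w\<in>{0..vbar I0}. 0 \<le> dens I0 s w) \<and>
        (dens I0 s has_integral 1) {0..vbar I0} \<and>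
        (\<exists>L. L-lipschitz_on {0..vbar I0} (dens I0 s))"
  proof (intro allI impI conjI)
    fix s
    show "(dens I0 s has_integral 1) {0..vbar I0}"
      using has_integral_const_real[of "1::real" 0 1] by (simp add: I0_def)
    show "\<exists>L. L-lipschitz_on {0..vbar I0} (dens I0 s)"
      by (rule exI[of _ 0]) (simp add: I0_def lipschitz_on_def)
    show "set (tb I0 s) = {..<nS I0}" by (auto simp: I0_def)
  qed (auto simp: I0_def)
qed (auto simp: I0_def)

definition p0 :: "nat \<Rightarrow> real" where "p0 = (\<lambda>_. 1/2)"

lemma vop: "is_VOP I0 id p0"
  unfolding is_VOP_def
proof (intro conjI allI impI)
  show "bij_betw id {..<nS I0} {..<nS I0}" by simp
  fix i assume "i < nS I0" then show "p0 i \<in> {0..vbar I0}" by (simp add: p0_def I0_def)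
next
  fix l assume "Suc l < nS I0" then show "p0 (id (Suc l)) \<le> p0 (id l)" by (simp add: p0_def)
next
  fix l assume "l < nS I0"
  then have "l = 0 \<or> l = 1" by (auto simp: I0_def)
  then show "local_max_on (\<lambda>q. revenue I0 ((restrict_prices (id ` {..<l}) p0)(id l := q)) (id l))
           {0..pmin I0 (id ` {..<l}) p0} (p0 (id l))"
  proof
    assume l: "l = 0"
    have "revenue I0 ((restrict_prices (id ` {..<l}) p0)(id l := q)) (id l) = 0"
      if "q \<in> {0..pmin I0 (id ` {..<l}) p0}" for q
    proof -
      have "{w\<in>{0..1}. buys I0 0 w ((restrict_prices {} p0)(0 := q)) 0} = {}"
        using that l by (auto simp: buys0[unfolded One_nat_def] restrict_prices_def pmin_def)
      then have "demand I0 ((restrict_prices {} p0)(0 := q)) 0 = 0" unfolding demand0 by (simp only: integral_empty)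
      then show ?thesis using l by (simp add: revenue_def)
    qed
    moreover have "p0 (id l) \<in> {0..pmin I0 (id ` {..<l}) p0}"
      using l by (simp add: p0_def pmin_def I0_def)
    ultimately show ?thesis unfolding local_max_on_def
      by (intro conjI exI[of _ 1]) (auto simp: p0_def l)
  next
    assume l: "l = 1"
    have pm: "pmin I0 (id ` {..<l}) p0 = 1/2" using l by (simp add: pmin_def p0_def lessThan_Suc)
    have rev: "revenue I0 ((restrict_prices (id ` {..<l}) p0)(id l := q)) (id l) = q * (1 - q)"
      if "q \<in> {0..1/2}" for q
    proof -
      have "{w\<in>{0..1}. buys I0 0 w ((restrict_prices {0} p0)(1 := q)) 1} = {w\<in>{0..1::real}. q \<le> w}"
        using that by (auto simp: buys1[unfolded One_nat_def] restrict_prices_def p0_def)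
      then show ?thesis using l that int_interval[of q]
        by (simp add: revenue_def demand0 lessThan_Suc)
    qed
    show ?thesis unfolding local_max_on_def pm
    proof (intro conjI exI[of _ 1] ballI impI)
      show "p0 (id l) \<in> {0..1/2}" by (simp add: p0_def)
      fix y :: real assume y: "y \<in> {0..1/2}"
      have "y * (1 - y) \<le> 1/2 * (1 - 1/2)"
        using sum_power2_ge_zero[of "y - 1/2" 0] by (simp add: algebra_simps power2_eq_square)
      then show "revenue I0 ((restrict_prices (id ` {..<l}) p0)(id l := y)) (id l)
          \<le> revenue I0 ((restrict_prices (id ` {..<l}) p0)(id l := p0 (id l))) (id l)"
        using rev[OF y] rev[of "1/2"] by (simp add: p0_def)
    qed simp
  qed
qed

lemma notLNE: "\<not> is_LNE I0 p0"
proof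
  assume "is_LNE I0 p0"
  then obtain U where U: "open U" "p0 0 \<in> U" "\<forall>q\<in>closure U. revenue I0 (p0(0 := q)) 0 \<le> revenue I0 p0 0"
    unfolding is_LNE_def I0_def by force
  obtain e where e: "e > 0" "ball (1/2) e \<subseteq> U" using U(1,2) open_contains_ball_eq[of U "1/2"] by (auto simp: p0_def)
  define q :: real where "q = max (1/4) (1/2 - e/2)"
  have q: "1/4 \<le> q" "q < 1/2" using e unfolding q_def by (auto simp: max_def)
  have "q \<in> ball (1/2) e" using e q by (auto simp: q_def dist_real_def)
  then have "q \<in> closure U" using e(2) closure_subset by blast
  then have le: "revenue I0 (p0(0 := q)) 0 \<le> revenue I0 p0 0" using U(3) by blast
  have "{w\<in>{0..1}. buys I0 0 w p0 0} = {}" by (auto simp: buys0[unfolded One_nat_def] p0_def)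
  then have "demand I0 p0 0 = 0" unfolding demand0 by (simp only: integral_empty)
  then have r0: "revenue I0 p0 0 = 0" by (simp add: revenue_def)
  have "{w\<in>{0..1}. buys I0 0 w (p0(0 := q)) 0} = {w\<in>{0..1::real}. q \<le> w}"
    using q by (auto simp: buys0[unfolded One_nat_def] p0_def)
  then have "revenue I0 (p0(0 := q)) 0 = q * (1 - q)"
    using q int_interval[of q] by (simp add: revenue_def demand0)
  moreover have "q * (1 - q) > 0" using q by simp
  ultimately show False using le r0 by simp
qed

theorem proposition4p2:
  shows "\<exists>I \<pi> p. valid_clc I \<and> is_VOP I \<pi> p \<and> \<not> is_LNE I p"
  using valid vop notLNE by blast

end
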